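(* (a) If $\eta_{ss}$ is smooth and $G$ is the Green function defined by $G_{ss}(s,x)-\lvert\eta_{ss}(s)\rvert^2G(s,x)=-\delta(s-x)$, $G(0,x)=0$, $G_s(1,x)=0$, then $\sup_{0\le s,x\le1}\lvert G_s(s,x)\rvert\le1$ and $\sup_{0<s\le 1,\,0\le x\le1}G(s,x)/s\le1$. (b) Let $n\in\mathbb{N}$, $\eta_1,\dots,\eta_{n+1}\in\mathbb{R}^d$ with $\eta_{n+1}=0$ and $\lvert(\nabla_+\eta)_k\rvert=1$ for $1\le k\le n$, and assume $\alpha_k=\langle(\nabla_+\eta)_{k+1},(\nabla_+\eta)_k\rangle\ge0$ for $1\le k\le n-1$. Let $G_{kj}$ be the discrete Green function $G_{kj}=\frac1n\sum_{i=1}^{\min\{j,k\}}\frac{p_{ij}p_{ik}}{\beta_i}$, $p_{ij}=\prod_{m=i}^{j-1}\frac{\alpha_m}{\beta_{m+1}}$, $\beta_n=1$, $\beta_i=2-\alpha_i^2/\beta_{i+1}$, and set $G_{0j}=0$. Then for all $1\le j,k\le n$: $\lvert n(G_{kj}-G_{k-1,j})\rvert\le1$ and $nG_{kj}/k\le1$.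
   Context: $(\nabla_+f)_k=n(f_{k+1}-f_k)$; empty products equal $1$. $\delta$ is the Dirac delta. *)

theory Defs
  imports "HOL-Analysis.Analysis"
begin

definition smooth_with_derivs :: "(nat \<Rightarrow> real \<Rightarrow> 'a::euclidean_space) \<Rightarrow> (real \<Rightarrow> 'a) \<Rightarrow> bool" where
  "smooth_with_derivs D eta \<longleftrightarrow> D 0 = eta \<and>
     (\<forall>k. \<forall>s\<in>{0..1}. (D k has_vector_derivative D (Suc k) s) (at s within {0..1}))"

text \<open>G is the Green function of  G_ss - q G = -delta(s-x), G(0,x)=0, G_s(1,x)=0 on [0,1].\<close>
definition green_fun :: "(real \<Rightarrow> real) \<Rightarrow> (real \<Rightarrow> real \<Rightarrow> real) \<Rightarrow> (real \<Rightarrow> real \<Rightarrow> real)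
    \<Rightarrow> (real \<Rightarrow> real \<Rightarrow> real) \<Rightarrow> bool" where
  "green_fun q G GL GR \<longleftrightarrow> (\<forall>x\<in>{0..1}.
     (\<forall>s\<in>{0..x}. ((\<lambda>t. G t x) has_real_derivative GL s x) (at s within {0..x}) \<and>
                 ((\<lambda>t. GL t x) has_real_derivative q s * G s x) (at s within {0..x})) \<and>
     (\<forall>s\<in>{x..1}. ((\<lambda>t. G t x) has_real_derivative GR s x) (at s within {x..1}) \<and>
                 ((\<lambda>t. GR t x) has_real_derivative q s * G s x) (at s within {x..1})) \<and>
     G 0 x = 0 \<and> GR 1 x = 0 \<and> GR x x - GL x x = -1)"

definition dgrad :: "nat \<Rightarrow> (nat \<Rightarrow> 'a::real_vector) \<Rightarrow> nat \<Rightarrow> 'a" where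
  "dgrad n f k = real n *\<^sub>R (f (Suc k) - f k)"

definition dalpha :: "nat \<Rightarrow> (nat \<Rightarrow> 'a::real_inner) \<Rightarrow> nat \<Rightarrow> real" where
  "dalpha n eta k = inner (dgrad n eta (Suc k)) (dgrad n eta k)"

text \<open>betaAux al n t = beta_(n-t); beta_n = 1, beta_i = 2 - al_i^2 / beta_(i+1).\<close>
fun betaAux :: "(nat \<Rightarrow> real) \<Rightarrow> nat \<Rightarrow> nat \<Rightarrow> real" where
  "betaAux al n 0 = 1"
| "betaAux al n (Suc t) = 2 - (al (n - Suc t))\<^sup>2 / betaAux al n t"

definition dbeta :: "(nat \<Rightarrow> real) \<Rightarrow> nat \<Rightarrow> nat \<Rightarrow> real" where
  "dbeta al n i = betaAux al n (n - i)"

definition dp :: "(nat \<Rightarrow> real) \<Rightarrow> nat \<Rightarrow> nat \<Rightarrow> nat \<Rightarrow> real" where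
  "dp al n i j = (\<Prod>m\<in>{i..<j}. al m / dbeta al n (Suc m))"

definition dgreen :: "(nat \<Rightarrow> real) \<Rightarrow> nat \<Rightarrow> nat \<Rightarrow> nat \<Rightarrow> real" where
  "dgreen al n k j = (if k = 0 then 0 else
     (1 / real n) * (\<Sum>i\<in>{1..min j k}. dp al n i j * dp al n i k / dbeta al n i))"

end

theory Submission
  imports Defs
begin


lemma mono_within:
  fixes f f' :: "real \<Rightarrow> real"
  assumes d: "\<forall>s\<in>{a..b}. (f has_real_derivative f' s) (at s within {a..b})"
    and nn: "\<forall>s\<in>{a..b}. 0 \<le> f' s" and h: "a \<le> s" "s \<le> t" "t \<le> b"
  shows "f s \<le> f t"
proof -
  have c: "continuous_on {a..b} f" using d by (intro DERIV_continuous_on) auto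
  have "continuous_on {s..t} f" by (rule continuous_on_subset[OF c]) (use h in auto)
  moreover have "\<exists>y. DERIV f z :> y \<and> y \<ge> 0" if "s < z" "z < t" for z
  proof -
    have "at z within {a..b} = at z" using that h by (intro at_within_Icc_at) auto
    then show ?thesis using d nn that h by (metis atLeastAtMost_iff less_eq_real_def order_trans)
  qed
  ultimately show ?thesis using DERIV_nonneg_imp_increasing_open[of s t f] h by blast
qed

lemma anti_within:
  fixes f f' :: "real \<Rightarrow> real"
  assumes d: "\<forall>s\<in>{a..b}. (f has_real_derivative f' s) (at s within {a..b})"
    and nn: "\<forall>s\<in>{a..b}. f' s \<le> 0" and h: "a \<le> s" "s \<le> t" "t \<le> b"
  shows "f t \<le> f s"
proof -
  have "(\<lambda>x. - f x) s \<le> (\<lambda>x. - f x) t"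
    by (rule mono_within[where f'="\<lambda>x. - f' x"]) (use d nn h in \<open>auto intro: DERIV_minus\<close>)
  then show ?thesis by simp
qed

lemma partA:
  fixes g gl gr q :: "real \<Rightarrow> real" and x :: real
  assumes x: "0 \<le> x" "x \<le> 1"
    and q: "\<And>s. 0 \<le> q s"
    and dL: "\<forall>s\<in>{0..x}. (g has_real_derivative gl s) (at s within {0..x}) \<and>
                 (gl has_real_derivative q s * g s) (at s within {0..x})"
    and dR: "\<forall>s\<in>{x..1}. (g has_real_derivative gr s) (at s within {x..1}) \<and>
                 (gr has_real_derivative q s * g s) (at s within {x..1})"
    and g0: "g 0 = 0" and gr1: "gr 1 = 0" and jump: "gr x - gl x = -1"
  shows "(\<forall>s\<in>{0..x}. \<bar>gl s\<bar> \<le> 1) \<and> (\<forall>s\<in>{x..1}. \<bar>gr s\<bar> \<le> 1) \<and>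
         (\<forall>s\<in>{0<..1}. g s / s \<le> 1)"
proof -
  have dLg: "(g has_real_derivative gl s) (at s within {0..x})"
    and dLl: "(gl has_real_derivative q s * g s) (at s within {0..x})" if "s \<in> {0..x}" for s
    using dL that by auto
  have dRg: "(g has_real_derivative gr s) (at s within {x..1})"
    and dRl: "(gr has_real_derivative q s * g s) (at s within {x..1})" if "s \<in> {x..1}" for s
    using dR that by auto
  have dhL: "((\<lambda>t. g t * gl t) has_real_derivative (gl s * gl s + q s * g s * g s)) (at s within {0..x})"
    if "s \<in> {0..x}" for s
    by (rule DERIV_cong[OF DERIV_mult'[OF dLg[OF that] dLl[OF that]]]) (simp add: algebra_simps)
  have dhR: "((\<lambda>t. g t * gr t) has_real_derivative (gr s * gr s + q s * g s * g s)) (at s within {x..1})"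
    if "s \<in> {x..1}" for s
    by (rule DERIV_cong[OF DERIV_mult'[OF dRg[OF that] dRl[OF that]]]) (simp add: algebra_simps)
  have d2L: "((\<lambda>t. g t * g t) has_real_derivative (2 * (g s * gl s))) (at s within {0..x})"
    if "s \<in> {0..x}" for s
    by (rule DERIV_cong[OF DERIV_mult'[OF dLg[OF that] dLg[OF that]]]) (simp add: algebra_simps)
  have d2R: "((\<lambda>t. g t * g t) has_real_derivative (2 * (g s * gr s))) (at s within {x..1})"
    if "s \<in> {x..1}" for s
    by (rule DERIV_cong[OF DERIV_mult'[OF dRg[OF that] dRg[OF that]]]) (simp add: algebra_simps)
  have sqnn: "0 \<le> a * a + b * c * c" if "0 \<le> b" for a b c :: real
    using that by (simp add: add_nonneg_nonneg mult_nonneg_nonneg mult.assoc)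
  have hL: "0 \<le> g s * gl s" if "s \<in> {0..x}" for s
  proof -
    have "(\<lambda>t. g t * gl t) 0 \<le> (\<lambda>t. g t * gl t) s"
      by (rule mono_within[where a=0 and b=x and f="\<lambda>t. g t * gl t" and f'="\<lambda>t. gl t * gl t + q t * g t * g t"]) (use dhL sqnn q that x in \<open>auto\<close>)
    then show ?thesis using g0 by simp
  qed
  have hR: "g s * gr s \<le> 0" if "s \<in> {x..1}" for s
  proof -
    have "(\<lambda>t. g t * gr t) s \<le> (\<lambda>t. g t * gr t) 1"
      by (rule mono_within[where a=x and b=1 and f="\<lambda>t. g t * gr t" and f'="\<lambda>t. gr t * gr t + q t * g t * g t"]) (use dhR sqnn q that x in \<open>auto\<close>)
    then show ?thesis using gr1 by simp
  qed
  have sqL: "g s * g s \<le> g t * g t" if "0 \<le> s" "s \<le> t" "t \<le> x" for s t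
    by (rule mono_within[where a=0 and b=x and f="\<lambda>t. g t * g t" and f'="\<lambda>t. 2 * (g t * gl t)"]) (use d2L hL that in \<open>auto simp del: atLeastAtMost_iff\<close>)
  have sqR: "g t * g t \<le> g s * g s" if "x \<le> s" "s \<le> t" "t \<le> 1" for s t
    by (rule anti_within[where a=x and b=1 and f="\<lambda>t. g t * g t" and f'="\<lambda>t. 2 * (g t * gr t)"]) (use d2R hR that in \<open>auto simp del: atLeastAtMost_iff\<close>)
  have gx: "0 \<le> g x"
  proof (rule ccontr)
    assume "\<not> 0 \<le> g x"
    then have n: "g x < 0" by simp
    have "0 \<le> g x * gl x" using hL x by auto
    then have "gl x \<le> 0" using n by (simp add: zero_le_mult_iff)
    moreover have "g x * gr x \<le> 0" using hR x by auto
    then have "0 \<le> gr x" using n by (simp add: mult_le_0_iff)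
    ultimately show False using jump by simp
  qed
  have contL: "continuous_on {0..x} g" by (rule DERIV_continuous_on) (use dLg in auto)
  have contR: "continuous_on {x..1} g" by (rule DERIV_continuous_on) (use dRg in auto)
  have gL: "0 \<le> g s" if sx: "s \<in> {0..x}" for s
  proof (rule ccontr)
    assume "\<not> 0 \<le> g s"
    then have n: "g s < 0" by simp
    have "continuous_on {s..x} g" by (rule continuous_on_subset[OF contL]) (use that in auto)
    then obtain t where t: "s \<le> t" "t \<le> x" "g t = 0" using IVT'[of g s 0 x] n gx sx by auto
    have "g s * g s \<le> g t * g t" using sqL[of s t] t sx by auto
    then show False using mult_neg_neg[OF n n] t by simp
  qed
  have gR: "0 \<le> g s" if sx: "s \<in> {x..1}" for s
  proof (rule ccontr)
    assume "\<not> 0 \<le> g s"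
    then have n: "g s < 0" by simp
    have "continuous_on {x..s} g" by (rule continuous_on_subset[OF contR]) (use that in auto)
    then obtain t where t: "x \<le> t" "t \<le> s" "g t = 0" using IVT2'[of g s 0 x] n gx sx by auto
    have "g s * g s \<le> g t * g t" using sqR[of t s] t sx by auto
    then show False using mult_neg_neg[OF n n] t by simp
  qed
  have grmono: "gr s \<le> gr t" if "x \<le> s" "s \<le> t" "t \<le> 1" for s t
    by (rule mono_within[where a=x and b=1 and f="gr" and f'="\<lambda>t. q t * g t"]) (use dRl gR q that in \<open>auto simp del: atLeastAtMost_iff\<close>)
  have glmono: "gl s \<le> gl t" if "0 \<le> s" "s \<le> t" "t \<le> x" for s t
    by (rule mono_within[where a=0 and b=x and f="gl" and f'="\<lambda>t. q t * g t"]) (use dLl gL q that in \<open>auto simp del: atLeastAtMost_iff\<close>)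
  have grle: "gr s \<le> 0" if "s \<in> {x..1}" for s using grmono[of s 1] that gr1 by auto
  have glx: "0 \<le> gl x"
  proof (cases "g x = 0")
    case True
    have z: "g s = 0" if "s \<in> {x..1}" for s
    proof - have "g s * g s \<le> 0" using sqR[of x s] that True by auto
      then have "g s * g s = 0" by (metis antisym zero_le_square power2_eq_square)
      then show ?thesis by simp qed
    have "gr 1 \<le> gr x"
      by (rule anti_within[where a=x and b=1 and f="gr" and f'="\<lambda>t. q t * g t"]) (use dRl z x in \<open>auto simp del: atLeastAtMost_iff\<close>)
    then show ?thesis using gr1 jump by simp
  next
    case False
    then have "0 < g x" using gx by simp
    moreover have "0 \<le> g x * gl x" using hL x by auto
    ultimately show ?thesis by (simp add: zero_le_mult_iff)
  qed
  have gl0: "0 \<le> gl 0"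
  proof (cases "g x = 0")
    case True
    have z: "g s = 0" if "s \<in> {0..x}" for s
    proof - have "g s * g s \<le> 0" using sqL[of s x] that True by auto
      then have "g s * g s = 0" by (metis antisym zero_le_square power2_eq_square)
      then show ?thesis by simp qed
    have "gl x \<le> gl 0"
      by (rule anti_within[where a=0 and b=x and f="gl" and f'="\<lambda>t. q t * g t"]) (use dLl z x in \<open>auto simp del: atLeastAtMost_iff\<close>)
    then show ?thesis using glx by simp
  next
    case False
    then have xp: "0 < x" using g0 gx x by (metis order_less_le)
    have lim: "((\<lambda>y. (g y - g 0) / (y - 0)) \<longlongrightarrow> gl 0) (at 0 within {0..x})"
      using dLg[of 0] x by (simp add: has_field_derivative_iff)
    have ev: "eventually (\<lambda>y. 0 \<le> (g y - g 0) / (y - 0)) (at 0 within {0..x})"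
      unfolding eventually_at_filter using gL g0 by (auto intro!: always_eventually)
    have "at 0 within {0..x} \<noteq> (bot :: real filter)"
      using xp by (simp add: at_within_Icc_at_right)
    then show ?thesis using tendsto_lowerbound[OF lim ev] by blast
  qed
  have A1: "\<forall>s\<in>{0..x}. \<bar>gl s\<bar> \<le> 1"
  proof
    fix s assume s: "s \<in> {0..x}"
    have "gl 0 \<le> gl s" "gl s \<le> gl x" using glmono s by auto
    moreover have "gr x \<le> 0" using grle x by auto
    ultimately show "\<bar>gl s\<bar> \<le> 1" using gl0 jump by auto
  qed
  have A2: "\<forall>s\<in>{x..1}. \<bar>gr s\<bar> \<le> 1"
  proof
    fix s assume s: "s \<in> {x..1}"
    have "gr x \<le> gr s" using grmono s by auto
    then show "\<bar>gr s\<bar> \<le> 1" using grle[OF s] glx jump by auto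
  qed
  have A3: "g s \<le> s" if "s \<in> {0<..1}" for s
  proof (cases "s \<le> x")
    case True
    have "(\<lambda>t. g t - t) s \<le> (\<lambda>t. g t - t) 0"
      by (rule anti_within[where a=0 and b=x and f="\<lambda>t. g t - t" and f'="\<lambda>t. gl t - 1"])
         (use dLg A1 True that in \<open>auto intro!: derivative_eq_intros\<close>)
    then show ?thesis using g0 by simp
  next
    case False
    have "g s \<le> g x"
      by (rule anti_within[where a=x and b=1 and f="g" and f'=gr]) (use dRg grle False that in auto)
    moreover have "g x \<le> x"
    proof -
      have "(\<lambda>t. g t - t) x \<le> (\<lambda>t. g t - t) 0"
        by (rule anti_within[where a=0 and b=x and f="\<lambda>t. g t - t" and f'="\<lambda>t. gl t - 1"])
           (use dLg A1 x in \<open>auto intro!: derivative_eq_intros\<close>)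
      then show ?thesis using g0 by simp
    qed
    ultimately show ?thesis using False by simp
  qed
  show ?thesis using A1 A2 A3 by auto
qed


definition SS :: "(nat \<Rightarrow> real) \<Rightarrow> nat \<Rightarrow> nat \<Rightarrow> real" where
  "SS al n k = (\<Sum>i\<in>{1..k}. (dp al n i k)\<^sup>2 / dbeta al n i)"

lemma beta_rec: "1 \<le> i \<Longrightarrow> i < n \<Longrightarrow> dbeta al n i = 2 - (al i)\<^sup>2 / dbeta al n (Suc i)"
proof -
  assume h: "1 \<le> i" "i < n"
  have e1: "n - i = Suc (n - Suc i)" using h by arith
  have e2: "n - Suc (n - Suc i) = i" using h by arith
  show ?thesis unfolding dbeta_def e1 using e2 by simp
qed

lemma beta_n: "dbeta al n n = 1" by (simp add: dbeta_def)

lemma beta_ge1: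
  assumes al: "\<forall>m. 1 \<le> m \<and> m < n \<longrightarrow> 0 \<le> al m \<and> al m \<le> 1"
  shows "1 \<le> i \<Longrightarrow> i \<le> n \<Longrightarrow> 1 \<le> dbeta al n i"
proof -
  have "\<forall>i. n - i = t \<longrightarrow> 1 \<le> i \<longrightarrow> i \<le> n \<longrightarrow> 1 \<le> dbeta al n i" for t
  proof (induction t)
    case 0
    then show ?case by (auto simp: dbeta_def)
  next
    case (Suc t)
    show ?case
    proof (intro allI impI)
      fix i assume h: "n - i = Suc t" "1 \<le> i" "i \<le> n"
      have b: "1 \<le> dbeta al n (Suc i)" using Suc.IH h by auto
      have a: "(al i)\<^sup>2 \<le> 1" using al h by (auto intro: power_le_one)
      have "(al i)\<^sup>2 / dbeta al n (Suc i) \<le> 1" using a b by (simp add: divide_le_eq_1)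
      then show "1 \<le> dbeta al n i" using beta_rec[of i n al] h by auto
    qed
  qed
  then show "1 \<le> i \<Longrightarrow> i \<le> n \<Longrightarrow> 1 \<le> dbeta al n i" by blast
qed

lemma r_bounds:
  assumes al: "\<forall>m. 1 \<le> m \<and> m < n \<longrightarrow> 0 \<le> al m \<and> al m \<le> 1"
  and h: "1 \<le> m" "m < n"
  shows "0 \<le> al m / dbeta al n (Suc m) \<and> al m / dbeta al n (Suc m) \<le> al m \<and> al m / dbeta al n (Suc m) \<le> 1"
proof -
  have b: "1 \<le> dbeta al n (Suc m)" using beta_ge1[OF al, of "Suc m"] h by auto
  have a: "0 \<le> al m" "al m \<le> 1" using al h by auto
  have "al m / dbeta al n (Suc m) \<le> al m" using a b by (simp add: divide_le_eq mult_le_cancel_left1)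
  then show ?thesis using a b by auto
qed

lemma dp_refl: "dp al n i i = 1" by (simp add: dp_def)

lemma dp_Suc: "i \<le> m \<Longrightarrow> dp al n i (Suc m) = dp al n i m * (al m / dbeta al n (Suc m))"
  by (simp add: dp_def prod.atLeastLessThan_Suc)

lemma dp_split: "i \<le> k \<Longrightarrow> k \<le> j \<Longrightarrow> dp al n i j = dp al n i k * dp al n k j"
  by (simp add: dp_def prod.atLeastLessThan_concat)

lemma dp_bounds:
  assumes al: "\<forall>m. 1 \<le> m \<and> m < n \<longrightarrow> 0 \<le> al m \<and> al m \<le> 1"
  and h: "1 \<le> i" "j \<le> n"
  shows "0 \<le> dp al n i j \<and> dp al n i j \<le> 1"
proof -
  have "\<forall>m\<in>{i..<j}. 0 \<le> al m / dbeta al n (Suc m) \<and> al m / dbeta al n (Suc m) \<le> 1"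
    using r_bounds[OF al] h by auto
  then show ?thesis unfolding dp_def by (auto intro: prod_nonneg prod_le_1)
qed

lemma sq_aux: "(x::real) = y * r \<Longrightarrow> x\<^sup>2 / b = r\<^sup>2 * (y\<^sup>2 / b)"
  by (simp add: power_mult_distrib)

lemma SS_Suc: "SS al n (Suc k) = (al k / dbeta al n (Suc k))\<^sup>2 * SS al n k + 1 / dbeta al n (Suc k)"
proof -
  have "SS al n (Suc k) = (\<Sum>i\<in>{1..k}. (dp al n i (Suc k))\<^sup>2 / dbeta al n i) + 1 / dbeta al n (Suc k)"
    by (simp add: SS_def dp_refl)
  also have "(\<Sum>i\<in>{1..k}. (dp al n i (Suc k))\<^sup>2 / dbeta al n i)
      = (\<Sum>i\<in>{1..k}. (al k / dbeta al n (Suc k))\<^sup>2 * ((dp al n i k)\<^sup>2 / dbeta al n i))"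
    by (rule sum.cong[OF refl], rule sq_aux[OF dp_Suc]) auto
  also have "\<dots> = (al k / dbeta al n (Suc k))\<^sup>2 * SS al n k"
    by (simp add: SS_def sum_distrib_left)
  finally show ?thesis .
qed

lemma SS_1: "SS al n 1 = 1 / dbeta al n 1" by (simp add: SS_def dp_refl)

lemma SS_1': "SS al n (Suc 0) = 1 / dbeta al n (Suc 0)" using SS_1[of al n] by simp

lemma SS_nonneg:
  assumes al: "\<forall>m. 1 \<le> m \<and> m < n \<longrightarrow> 0 \<le> al m \<and> al m \<le> 1" and "k \<le> n"
  shows "0 \<le> SS al n k"
proof -
  have "\<forall>i\<in>{1..k}. 0 \<le> dbeta al n i" using beta_ge1[OF al] assms(2) by (metis atLeastAtMost_iff le_trans order.trans zero_le_one)
  then show ?thesis unfolding SS_def by (intro sum_nonneg divide_nonneg_nonneg) auto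
qed

lemma claimC:
  assumes al: "\<forall>m. 1 \<le> m \<and> m < n \<longrightarrow> 0 \<le> al m \<and> al m \<le> 1"
  shows "1 \<le> k \<Longrightarrow> k \<le> n \<Longrightarrow> (dbeta al n k - 1) * SS al n k \<le> 1"
proof (induction k)
  case 0 then show ?case by simp
next
  case (Suc k)
  show ?case
  proof (cases "k = 0")
    case True
    have "1 \<le> dbeta al n 1" using beta_ge1[OF al, of 1] Suc by auto
    then have "(dbeta al n 1 - 1) * SS al n 1 \<le> 1" unfolding SS_1 by (simp add: field_simps)
    then show ?thesis using True by simp
  next
    case False
    define c where "c = dbeta al n (Suc k)"
    define a where "a = al k"
    define S where "S = SS al n k"
    define b where "b = dbeta al n k"
    define u where "u = a\<^sup>2 / c"
    have c1: "1 \<le> c" using beta_ge1[OF al, of "Suc k"] Suc.prems c_def by auto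
    have a01: "0 \<le> a" "a \<le> 1" using al Suc.prems False a_def by auto
    have S0: "0 \<le> S" using SS_nonneg[OF al, of k] Suc.prems S_def by auto
    have IH: "(b - 1) * S \<le> 1" using Suc False b_def S_def by auto
    have bu: "b = 2 - u" using beta_rec[of k n al] Suc.prems False b_def u_def a_def c_def by auto
    have SS': "SS al n (Suc k) = (u / c) * S + 1 / c"
      using SS_Suc[of al n k] c1 unfolding u_def S_def a_def c_def by (simp add: power_divide power2_eq_square)
    have u0: "0 \<le> u" using c1 u_def by auto
    have "(c - 1) * u = a\<^sup>2 - u" using c1 unfolding u_def by (simp add: field_simps)
    also have "\<dots> \<le> b - 1" using a01 bu by (simp add: power_le_one)
    finally have "(c - 1) * u * S \<le> (b - 1) * S" using S0 by (simp add: mult_right_mono)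
    then have k1: "(c - 1) * u * S \<le> 1" using IH by linarith
    have "(c - 1) * SS al n (Suc k) = ((c - 1) * u * S + (c - 1)) / c"
      using SS' c1 by (simp add: field_simps)
    also have "\<dots> \<le> (1 + (c - 1)) / c" using k1 c1 by (simp add: divide_right_mono)
    also have "\<dots> = 1" using c1 by simp
    finally show ?thesis using c_def by simp
  qed
qed

lemma claimD:
  assumes al: "\<forall>m. 1 \<le> m \<and> m < n \<longrightarrow> 0 \<le> al m \<and> al m \<le> 1"
  and j: "1 \<le> j"
  shows "j \<le> m \<Longrightarrow> m \<le> n \<Longrightarrow> SS al n j * dp al n j m * (dbeta al n m - 1) \<le> 1"
proof (induction m)
  case 0 then show ?case using j by simp
next
  case (Suc m)
  show ?case
  proof (cases "j = Suc m")
    case True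
    then show ?thesis using claimC[OF al, of "Suc m"] Suc.prems j by (simp add: dp_refl mult.commute)
  next
    case False
    then have jm: "j \<le> m" "1 \<le> m" "m < n" using Suc.prems j by auto
    define c where "c = dbeta al n (Suc m)"
    define a where "a = al m"
    have c1: "1 \<le> c" using beta_ge1[OF al, of "Suc m"] Suc.prems c_def by auto
    have a01: "0 \<le> a" "a \<le> 1" using al jm a_def by auto
    have bm: "dbeta al n m = 2 - a\<^sup>2 / c" using beta_rec[of m n al] jm a_def c_def by auto
    have key: "(a / c) * (c - 1) \<le> dbeta al n m - 1"
    proof -
      have "a * (c - 1) \<le> c - a\<^sup>2"
      proof -
        have "a\<^sup>2 - a \<le> 0" using a01 mult_left_le[of a a] by (simp add: power2_eq_square)
        moreover have "0 \<le> c * (1 - a)" using a01 c1 by simp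
        ultimately show ?thesis by (simp add: algebra_simps power2_eq_square)
      qed
      then show ?thesis using bm c1 by (simp add: field_simps)
    qed
    have nn: "0 \<le> SS al n j * dp al n j m"
      using SS_nonneg[OF al, of j] dp_bounds[OF al, of j m] jm j by (auto intro!: mult_nonneg_nonneg)
    have IH: "SS al n j * dp al n j m * (dbeta al n m - 1) \<le> 1" using Suc jm by auto
    have "SS al n j * dp al n j (Suc m) * (dbeta al n (Suc m) - 1)
        = SS al n j * dp al n j m * ((a / c) * (c - 1))"
      using dp_Suc[of j m al n] jm a_def c_def by simp
    also have "\<dots> \<le> SS al n j * dp al n j m * (dbeta al n m - 1)"
      using key nn by (rule mult_left_mono)
    finally show ?thesis using IH by linarith
  qed
qed

lemma H_formula:
  assumes "1 \<le> k" "0 < n"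
  shows "real n * dgreen al n k j = (if k \<le> j then dp al n k j * SS al n k else dp al n j k * SS al n j)"
proof (cases "k \<le> j")
  case True
  have "(\<Sum>i\<in>{1..min j k}. dp al n i j * dp al n i k / dbeta al n i)
      = (\<Sum>i\<in>{1..k}. dp al n k j * ((dp al n i k)\<^sup>2 / dbeta al n i))"
    proof (rule sum.cong)
    show "{1..min j k} = {1..k}" using True by simp
    fix i assume "i \<in> {1..k}"
    then have "dp al n i j = dp al n i k * dp al n k j" using True by (intro dp_split) auto
    then show "dp al n i j * dp al n i k / dbeta al n i = dp al n k j * ((dp al n i k)\<^sup>2 / dbeta al n i)"
      by (simp add: power2_eq_square)
  qed
  also have "\<dots> = dp al n k j * SS al n k" by (simp add: SS_def sum_distrib_left)
  finally show ?thesis using assms True by (simp add: dgreen_def)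
next
  case False
  have "(\<Sum>i\<in>{1..min j k}. dp al n i j * dp al n i k / dbeta al n i)
      = (\<Sum>i\<in>{1..j}. dp al n j k * ((dp al n i j)\<^sup>2 / dbeta al n i))"
    proof (rule sum.cong)
    show "{1..min j k} = {1..j}" using False by simp
    fix i assume "i \<in> {1..j}"
    then have "dp al n i k = dp al n i j * dp al n j k" using False by (intro dp_split) auto
    then show "dp al n i j * dp al n i k / dbeta al n i = dp al n j k * ((dp al n i j)\<^sup>2 / dbeta al n i)"
      by (simp add: power2_eq_square)
  qed
  also have "\<dots> = dp al n j k * SS al n j" by (simp add: SS_def sum_distrib_left)
  finally show ?thesis using assms False by (simp add: dgreen_def)
qed

lemma abs_mult_le1: "0 \<le> (p::real) \<Longrightarrow> p \<le> 1 \<Longrightarrow> \<bar>X\<bar> \<le> 1 \<Longrightarrow> \<bar>p * X\<bar> \<le> 1"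
  by (simp add: abs_mult mult_le_one)

lemma diff_bound:
  assumes al: "\<forall>m. 1 \<le> m \<and> m < n \<longrightarrow> 0 \<le> al m \<and> al m \<le> 1"
  and j: "1 \<le> j" "j \<le> n" and k: "1 \<le> k" "k \<le> n"
  shows "\<bar>real n * dgreen al n k j - real n * dgreen al n (k - 1) j\<bar> \<le> 1"
proof -
  have n0: "0 < n" using j by auto
  show ?thesis
  proof (cases "k \<le> j")
    case kj: True
    show ?thesis
    proof (cases "k = 1")
      case True
      have "real n * dgreen al n k j = dp al n 1 j * (1 / dbeta al n 1)"
        using H_formula[of k n al j] n0 kj True by (simp add: SS_1')
      moreover have "0 \<le> dp al n 1 j" "dp al n 1 j \<le> 1" using dp_bounds[OF al, of 1 j] j by auto
      moreover have "1 \<le> dbeta al n 1" using beta_ge1[OF al, of 1] j by auto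
      moreover have "dgreen al n (k - 1) j = 0" using True by (simp add: dgreen_def)
      ultimately show ?thesis by (auto intro!: abs_mult_le1 simp: divide_le_eq)
    next
      case False
      then obtain m where m: "k = Suc m" "1 \<le> m" using k by (cases k) auto
      define r where "r = al m / dbeta al n (Suc m)"
      define c where "c = dbeta al n (Suc m)"
      define S where "S = SS al n m"
      have rb: "0 \<le> r" "r \<le> al m" "r \<le> 1" using r_bounds[OF al, of m] m k r_def by auto
      have a01: "0 \<le> al m" "al m \<le> 1" using al m k by auto
      have c1: "1 \<le> c" using beta_ge1[OF al, of "Suc m"] m k c_def by auto
      have S0: "0 \<le> S" using SS_nonneg[OF al, of m] m k S_def by auto
      have C: "(dbeta al n m - 1) * S \<le> 1" using claimC[OF al, of m] m k S_def by auto
      have bm: "dbeta al n m - 1 = 1 - al m * r"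
        using beta_rec[of m n al] m k unfolding r_def by (simp add: power2_eq_square)
      have Sk: "SS al n k = r\<^sup>2 * S + 1 / c" using SS_Suc[of al n m] m r_def c_def S_def by simp
      have dpm: "dp al n m j = r * dp al n k j"
        using dp_split[of m k j al n] dp_Suc[of m m al n] m kj by (simp add: dp_refl r_def)
      have yk: "real n * dgreen al n k j = dp al n k j * SS al n k"
        using H_formula[of k n al j] n0 kj m by simp
      have ym: "real n * dgreen al n (k - 1) j = dp al n k j * (r * S)"
        using H_formula[of m n al j] n0 kj m dpm S_def by simp
      have X: "\<bar>SS al n k - r * S\<bar> \<le> 1"
      proof -
        have "r\<^sup>2 * S \<le> r * S" using rb S0 by (simp add: power2_eq_square mult_left_le mult_right_mono)
        moreover have "1 / c \<le> 1" using c1 by simp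
        moreover have "1 / c \<ge> 0" using c1 by simp
        moreover have "(r - r\<^sup>2) * S \<le> 1"
        proof -
          have "r - r\<^sup>2 \<le> 1 - al m * r"
          proof -
            have "al m * r \<le> r" using a01 rb by (simp add: mult_left_le_one_le)
            moreover have "0 \<le> (1 - r)\<^sup>2" by simp
            ultimately show ?thesis by (simp add: power2_eq_square algebra_simps)
          qed
          then have "(r - r\<^sup>2) * S \<le> (1 - al m * r) * S" using S0 by (rule mult_right_mono)
          then show ?thesis using C bm by simp
        qed
        moreover have "(r - r\<^sup>2) * S = r * S - r\<^sup>2 * S" by (simp add: algebra_simps)
        ultimately show ?thesis unfolding Sk abs_le_iff by linarith
      qed
      have "\<bar>dp al n k j * (SS al n k - r * S)\<bar> \<le> 1"
        using abs_mult_le1 dp_bounds[OF al, of k j] X k j by auto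
      then show ?thesis using yk ym by (simp add: algebra_simps)
    qed
  next
    case jk: False
    then obtain m where m: "k = Suc m" "j \<le> m" "m < n" using k by (cases k) auto
    have m1: "1 \<le> m" using m j by auto
    define r where "r = al m / dbeta al n (Suc m)"
    have rb: "0 \<le> r" "r \<le> al m" "r \<le> 1" using r_bounds[OF al, of m] m m1 r_def by auto
    have a01: "0 \<le> al m" "al m \<le> 1" using al m m1 by auto
    have bm: "dbeta al n m - 1 = 1 - al m * r"
      using beta_rec[of m n al] m m1 unfolding r_def by (simp add: power2_eq_square)
    define P where "P = dp al n j m * SS al n j"
    have P0: "0 \<le> P" using dp_bounds[OF al, of j m] SS_nonneg[OF al, of j] m j P_def by auto
    have D: "P * (1 - al m * r) \<le> 1" using claimD[OF al j(1), of m] m bm P_def by (simp add: mult_ac)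
    have yk: "real n * dgreen al n k j = P * r"
      using H_formula[of k n al j] n0 jk m dp_Suc[of j m al n] P_def r_def by simp
    have ym: "real n * dgreen al n (k - 1) j = P"
      using H_formula[of m n al j] n0 jk m m1 P_def by (cases "m = j") (auto simp: dp_refl)
    have "P * (1 - r) \<le> P * (1 - al m * r)" using P0 a01 rb
      by (intro mult_left_mono) (auto simp: mult_left_le_one_le)
    then have "P * (1 - r) \<le> 1" using D by linarith
    moreover have "0 \<le> P * (1 - r)" using P0 rb by simp
    ultimately show ?thesis using yk ym by (simp add: algebra_simps abs_le_iff)
  qed
qed

lemma partB:
  assumes al: "\<forall>m. 1 \<le> m \<and> m < n \<longrightarrow> 0 \<le> al m \<and> al m \<le> 1"
  and j: "1 \<le> j" "j \<le> n" and k: "1 \<le> k" "k \<le> n"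
  shows "\<bar>real n * (dgreen al n k j - dgreen al n (k - 1) j)\<bar> \<le> 1 \<and> real n * dgreen al n k j / real k \<le> 1"
proof -
  have le: "real n * dgreen al n k j \<le> real k" if "k \<le> n" for k
    using that
  proof (induction k)
    case 0 then show ?case by (simp add: dgreen_def)
  next
    case (Suc k)
    have "\<bar>real n * dgreen al n (Suc k) j - real n * dgreen al n (Suc k - 1) j\<bar> \<le> 1"
      using diff_bound[OF al j, of "Suc k"] Suc.prems by auto
    then show ?case using Suc by auto
  qed
  have "real n * dgreen al n k j / real k \<le> 1" using le[OF k(2)] k by (simp add: divide_le_eq)
  moreover have "\<bar>real n * (dgreen al n k j - dgreen al n (k - 1) j)\<bar> \<le> 1"
    using diff_bound[OF al j k] by (simp add: right_diff_distrib)
  ultimately show ?thesis by blast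
qed

theorem proposition3p3:
  shows "(\<forall>(eta :: real \<Rightarrow> 'a::euclidean_space) D G GL GR.
            smooth_with_derivs D eta \<and> green_fun (\<lambda>s. (norm (D 2 s))\<^sup>2) G GL GR \<longrightarrow>
              (\<forall>x\<in>{0..1}. (\<forall>s\<in>{0..x}. \<bar>GL s x\<bar> \<le> 1) \<and> (\<forall>s\<in>{x..1}. \<bar>GR s x\<bar> \<le> 1)) \<and>
              (\<forall>s\<in>{0<..1}. \<forall>x\<in>{0..1}. G s x / s \<le> 1))
       \<and> (\<forall>(n :: nat) (eta :: nat \<Rightarrow> 'b::euclidean_space).
            eta (Suc n) = 0 \<and>
            (\<forall>k\<in>{1..n}. norm (dgrad n eta k) = 1) \<and>
            (\<forall>k\<in>{1..n-1}. dalpha n eta k \<ge> 0) \<longrightarrow>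
              (\<forall>j\<in>{1..n}. \<forall>k\<in>{1..n}.
                 \<bar>real n * (dgreen (dalpha n eta) n k j - dgreen (dalpha n eta) n (k - 1) j)\<bar> \<le> 1 \<and>
                 real n * dgreen (dalpha n eta) n k j / real k \<le> 1))"
  proof (intro conjI allI impI)
  fix eta :: "real \<Rightarrow> 'a::euclidean_space" and D G GL GR
  assume h: "smooth_with_derivs D eta \<and> green_fun (\<lambda>s. (norm (D 2 s))\<^sup>2) G GL GR"
  have gf: "green_fun (\<lambda>s. (norm (D 2 s))\<^sup>2) G GL GR" using h by simp
  have P: "(\<forall>s\<in>{0..x}. \<bar>GL s x\<bar> \<le> 1) \<and> (\<forall>s\<in>{x..1}. \<bar>GR s x\<bar> \<le> 1) \<and>
         (\<forall>s\<in>{0<..1}. G s x / s \<le> 1)" if x: "x \<in> {0..1}" for x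
  proof -
    have gx: "(\<forall>s\<in>{0..x}. ((\<lambda>t. G t x) has_real_derivative GL s x) (at s within {0..x}) \<and>
                 ((\<lambda>t. GL t x) has_real_derivative (norm (D 2 s))\<^sup>2 * G s x) (at s within {0..x})) \<and>
     (\<forall>s\<in>{x..1}. ((\<lambda>t. G t x) has_real_derivative GR s x) (at s within {x..1}) \<and>
                 ((\<lambda>t. GR t x) has_real_derivative (norm (D 2 s))\<^sup>2 * G s x) (at s within {x..1})) \<and>
     G 0 x = 0 \<and> GR 1 x = 0 \<and> GR x x - GL x x = -1"
      using gf x unfolding green_fun_def by blast
    show ?thesis
      by (rule partA[where g="\<lambda>t. G t x" and gl="\<lambda>t. GL t x" and gr="\<lambda>t. GR t x"
            and q="\<lambda>s. (norm (D 2 s))\<^sup>2"]) (use gx x in auto)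
  qed
  show "\<forall>x\<in>{0..1}. (\<forall>s\<in>{0..x}. \<bar>GL s x\<bar> \<le> 1) \<and> (\<forall>s\<in>{x..1}. \<bar>GR s x\<bar> \<le> 1)"
    using P by blast
  show "\<forall>s\<in>{0<..1}. \<forall>x\<in>{0..1}. G s x / s \<le> 1" using P by blast
next
  fix n :: nat and eta :: "nat \<Rightarrow> 'b::euclidean_space"
  assume h: "eta (Suc n) = 0 \<and> (\<forall>k\<in>{1..n}. norm (dgrad n eta k) = 1) \<and>
            (\<forall>k\<in>{1..n-1}. dalpha n eta k \<ge> 0)"
  have al: "\<forall>m. 1 \<le> m \<and> m < n \<longrightarrow> 0 \<le> dalpha n eta m \<and> dalpha n eta m \<le> 1"
  proof (intro allI impI)
    fix m assume m: "1 \<le> m \<and> m < n"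
    have "0 \<le> dalpha n eta m" using h m by auto
    moreover have "dalpha n eta m \<le> norm (dgrad n eta (Suc m)) * norm (dgrad n eta m)"
      unfolding dalpha_def by (rule norm_cauchy_schwarz)
    moreover have "norm (dgrad n eta (Suc m)) = 1" "norm (dgrad n eta m) = 1" using h m by auto
    ultimately show "0 \<le> dalpha n eta m \<and> dalpha n eta m \<le> 1" by simp
  qed
  show "\<forall>j\<in>{1..n}. \<forall>k\<in>{1..n}.
          \<bar>real n * (dgreen (dalpha n eta) n k j - dgreen (dalpha n eta) n (k - 1) j)\<bar> \<le> 1 \<and>
          real n * dgreen (dalpha n eta) n k j / real k \<le> 1"
    using partB[OF al] by auto
qed

end
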